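(* Let $(\Xi,\mathcal{F},P)$ be a probability space and $\{y_t\}_{t\in\mathbb{Z}}$ a real, mean-zero, covariance-stationary series on it; put $\mathcal{F}_t=\sigma(y_s,\,s\le t)$. Assume (D1) $P\{y_1^2>0\}=1$; (D2) $y_t=\sum_{s=0}^{\infty}\kappa_s\epsilon_{t-s}$ with $\kappa_0=1$, $\sum_s|\kappa_s|<\infty$, $\kappa(z)=\sum_s\kappa_s z^s\neq 0$ for $|z|\le 1$, where $\{\epsilon_t\}$ is a martingale difference sequence with respect to $\{\mathcal{F}_t\}$; (D3) $E[\epsilon_t^2\mid\mathcal{F}_{t-1}]=\sigma_\epsilon^2$ a.s. (constant); (D4) $\sup_t|\epsilon_t|\le K<\infty$ a.s. Fix $\beta\in[0,1]$, let $\theta_t$ be generated by the recursive algorithm in the context, and assume there are random variables $k^*$ (integer, $0\le k^*<\infty$) and $K^*\in(0,1)$ such that a.s. $|\theta_{t+k^*}|\le K^*$ for all $t\ge1$. Then for each integer $u\ge0$ and each (possibly random) integer $0\le k^*<\infty$, $$\frac{\sigma_\epsilon^2}{t}\sum_{s=1}^t\sum_{j=0}^u\big(\kappa_j^\phi(s)\big)^2=\frac{\sigma_\epsilon^2}{t}\sum_{s=1}^t\sum_{j=0}^u\Big(\sum_{l=0}^j(-\theta_{s+k^*})^l\sum_{p=0}^{j-l}(-\beta\theta_{s+k^*})^p\kappa_{j-l-p}\Big)^2+o_{a.s.}(1).$$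
   Context: Recursive algorithm: set $\theta_1=0$, $\bar P_1=0$, $e_1=y_1$, $x_1=y_1$, $\phi_1=x_1$, and for $t\ge2$: $x_t=y_t-\beta\theta_{t-1}x_{t-1}$; $e_t=y_t-\theta_{t-1}e_{t-1}$; $\phi_t=x_t-\theta_{t-1}\phi_{t-1}$; $\bar P_t=\frac1t\sum_{s=1}^{t-1}\phi_s^2$; $\theta_t=\theta_{t-1}+\bar P_t^{-1}\frac1t\phi_{t-1}e_t$. Coefficients: for $t\ge1$, $j\ge0$ (empty products equal 1), $\kappa_j^x(t)=\sum_{l=0}^{\min(j,t-1)}(-\beta)^l\kappa_{j-l}\prod_{i=1}^l\theta_{t-i}$; $\kappa_j^\phi(1)=\kappa_j$ and $\kappa_j^\phi(t)=\kappa_j^x(t)-\theta_{t-1}\kappa_{j-1}^\phi(t-1)$ for $t\ge2$, with $\kappa_{-1}^\phi(\cdot):=0$; these are the coefficients in $\phi_t=\sum_{j\ge0}\kappa_j^\phi(t)\epsilon_{t-j}$. The notation $o_{a.s.}(1)$ denotes a term converging to $0$ almost surely as $t\to\infty$. *)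

theory Defs
  imports "HOL-Probability.Probability"
begin

definition nat_filt :: "'a measure \<Rightarrow> (int \<Rightarrow> 'a \<Rightarrow> real) \<Rightarrow> int \<Rightarrow> 'a measure" where
  "nat_filt M y t = sigma (space M) (\<Union>s\<in>{..t}. (\<lambda>A. y s -` A \<inter> space M) ` sets borel)"

text \<open>State of the recursive algorithm. alg_state beta y n is the tuple
  (theta_t, x_t, e_t, phi_t, S_t) at time t = n+1, where S_t = sum_{s=1}^t phi_s^2,
  so that Pbar_t = S_{t-1}/t.  Pbar_t^{-1} is Isabelle's inverse (inverse 0 = 0).\<close>
fun alg_state :: "real \<Rightarrow> (nat \<Rightarrow> real) \<Rightarrow> nat \<Rightarrow> real \<times> real \<times> real \<times> real \<times> real" where
  "alg_state beta y 0 = (0, y 1, y 1, y 1, (y 1)^2)"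
| "alg_state beta y (Suc n) =
     (case alg_state beta y n of (th, xp, ep, php, Sp) \<Rightarrow>
       (let t = real (n + 2);
            x = y (n + 2) - beta * th * xp;
            e = y (n + 2) - th * ep;
            ph = x - th * php;
            Pbar = Sp / t;
            th' = th + inverse Pbar * (1 / t) * php * e
        in (th', x, e, ph, Sp + ph^2)))"

text \<open>theta_t for t \<ge> 1 (the value at t = 0 is irrelevant).\<close>
definition theta :: "real \<Rightarrow> (nat \<Rightarrow> real) \<Rightarrow> nat \<Rightarrow> real" where
  "theta beta y t = fst (alg_state beta y (t - 1))"

definition kappa_x :: "(nat \<Rightarrow> real) \<Rightarrow> real \<Rightarrow> (nat \<Rightarrow> real) \<Rightarrow> nat \<Rightarrow> nat \<Rightarrow> real" where
  "kappa_x kappa beta th t j =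
     (\<Sum>l = 0..min j (t - 1). (- beta) ^ l * kappa (j - l) * (\<Prod>i = 1..l. th (t - i)))"

text \<open>kphi_aux n j = kappa^phi_j(n+1).\<close>
fun kphi_aux :: "(nat \<Rightarrow> real) \<Rightarrow> real \<Rightarrow> (nat \<Rightarrow> real) \<Rightarrow> nat \<Rightarrow> nat \<Rightarrow> real" where
  "kphi_aux kappa beta th 0 j = kappa j"
| "kphi_aux kappa beta th (Suc n) j =
     kappa_x kappa beta th (n + 2) j
     - th (n + 1) * (case j of 0 \<Rightarrow> 0 | Suc j' \<Rightarrow> kphi_aux kappa beta th n j')"

definition kappa_phi :: "(nat \<Rightarrow> real) \<Rightarrow> real \<Rightarrow> (nat \<Rightarrow> real) \<Rightarrow> nat \<Rightarrow> nat \<Rightarrow> real" where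
  "kappa_phi kappa beta th t j = kphi_aux kappa beta th (t - 1) j"

end

theory Submission
  imports Defs
begin


lemma zero_Bseq_mult:
  fixes f g :: "nat \<Rightarrow> real"
  assumes "f \<longlonglongrightarrow> 0" "Bseq g"
  shows "(\<lambda>n. f n * g n) \<longlonglongrightarrow> 0"
proof -
  have Z: "Zfun f sequentially" using tendsto_Zfun_iff[of f 0 sequentially] assms(1) by simp
  have "Zfun (\<lambda>n. f n * g n) sequentially"
    by (rule bounded_bilinear.Zfun_prod_Bfun[OF bounded_bilinear_mult Z assms(2)])
  then show ?thesis using tendsto_Zfun_iff[of "\<lambda>n. f n * g n" 0 sequentially] by simp
qed

lemma diff_mult_close:
  fixes a a' b b' :: "nat \<Rightarrow> real"
  assumes "(\<lambda>n. a n - a' n) \<longlonglongrightarrow> 0" "(\<lambda>n. b n - b' n) \<longlonglongrightarrow> 0" "Bseq a'" "Bseq b'"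
  shows "(\<lambda>n. a n * b n - a' n * b' n) \<longlonglongrightarrow> 0"
proof -
  have e: "(\<lambda>n. a n * b n - a' n * b' n) = (\<lambda>n. (a n - a' n) * (b n - b' n) + (a n - a' n) * b' n + (b n - b' n) * a' n)"
    by (auto simp: algebra_simps)
  have "(\<lambda>n. (a n - a' n) * (b n - b' n)) \<longlonglongrightarrow> 0 * 0"
    by (intro tendsto_mult assms)
  moreover have "(\<lambda>n. (a n - a' n) * b' n) \<longlonglongrightarrow> 0" by (rule zero_Bseq_mult[OF assms(1,4)])
  moreover have "(\<lambda>n. (b n - b' n) * a' n) \<longlonglongrightarrow> 0" by (rule zero_Bseq_mult[OF assms(2,3)])
  ultimately have "(\<lambda>n. (a n - a' n) * (b n - b' n) + (a n - a' n) * b' n + (b n - b' n) * a' n) \<longlonglongrightarrow> 0 * 0 + 0 + 0"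
    by (intro tendsto_add)
  then show ?thesis unfolding e by simp
qed

lemma Bseq_cont:
  fixes th :: "nat \<Rightarrow> real" and f :: "real \<Rightarrow> real"
  assumes "Bseq th" "continuous_on UNIV f"
  shows "Bseq (\<lambda>n. f (th n))"
proof -
  obtain R where R: "\<And>n. norm (th n) \<le> R" using assms(1) unfolding Bseq_def by blast
  have "compact (f ` cball 0 R)"
    by (rule compact_continuous_image) (use assms(2) continuous_on_subset in auto)
  then obtain B where "\<forall>x\<in>f ` cball 0 R. norm x \<le> B"
    using compact_imp_bounded bounded_iff by blast
  then have "\<And>n. norm (f (th n)) \<le> B" using R by (auto simp: dist_norm)
  then show ?thesis by (rule BseqI')
qed

lemma cesaro:
  fixes a :: "nat \<Rightarrow> real"
  assumes "a \<longlonglongrightarrow> 0"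
  shows "(\<lambda>t. (\<Sum>s=1..t. a s) / real t) \<longlonglongrightarrow> 0"
proof (rule LIMSEQ_I)
  fix r :: real assume r: "0 < r"
  obtain N where N: "\<And>n. n \<ge> N \<Longrightarrow> norm (a n) < r/2"
    using LIMSEQ_D[OF assms, of "r/2"] r by auto
  define C where "C = (\<Sum>s=1..N. \<bar>a s\<bar>)"
  have C0: "C \<ge> 0" unfolding C_def by (auto intro: sum_nonneg)
  obtain N2 :: nat where N2: "real N2 > 2 * C / r" using reals_Archimedean2 by blast
  show "\<exists>no. \<forall>n\<ge>no. norm ((\<Sum>s=1..n. a s) / real n - 0) < r"
  proof (intro exI allI impI)
    fix n assume n: "n \<ge> max (Suc N) N2"
    have nN: "n > N" using n by auto
    have split: "{1..n} = {1..N} \<union> {Suc N..n}" using nN by auto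
    have "(\<Sum>s=1..n. a s) = (\<Sum>s=1..N. a s) + (\<Sum>s=Suc N..n. a s)"
      unfolding split by (rule sum.union_disjoint) auto
    hence h1: "\<bar>\<Sum>s=1..n. a s\<bar> \<le> \<bar>\<Sum>s=1..N. a s\<bar> + \<bar>\<Sum>s=Suc N..n. a s\<bar>" by simp
    have h2: "\<bar>\<Sum>s=1..N. a s\<bar> \<le> C" unfolding C_def by (rule sum_abs)
    have "\<bar>\<Sum>s=Suc N..n. a s\<bar> \<le> (\<Sum>s=Suc N..n. \<bar>a s\<bar>)" by (rule sum_abs)
    also have "\<dots> \<le> (\<Sum>s=Suc N..n. r/2)"
    proof (rule sum_mono)
      fix s assume "s \<in> {Suc N..n}" then show "\<bar>a s\<bar> \<le> r/2" using N[of s] by simp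
    qed
    also have "\<dots> \<le> real n * (r/2)" using r by simp
    finally have "\<bar>\<Sum>s=Suc N..n. a s\<bar> \<le> real n * (r/2)" .
    with h1 h2 have le: "\<bar>\<Sum>s=1..n. a s\<bar> \<le> C + real n * (r/2)" by linarith
    have npos: "real n > 0" using nN by simp
    have "C < real n * (r/2)"
    proof -
      have "real n \<ge> real N2" using n by simp
      hence "real n > 2 * C / r" using N2 by linarith
      thus ?thesis using r by (simp add: field_simps)
    qed
    hence "\<bar>\<Sum>s=1..n. a s\<bar> < real n * r" using le by linarith
    thus "norm ((\<Sum>s=1..n. a s) / real n - 0) < r" using npos
      by (simp add: abs_divide field_simps)
  qed
qed

lemma close_shift:
  fixes th :: "nat \<Rightarrow> real"
  assumes "(\<lambda>n. th (Suc n) - th n) \<longlonglongrightarrow> 0"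
  shows "(\<lambda>n. th (n + a) - th (n + b)) \<longlonglongrightarrow> 0"
proof -
  have d: "(\<lambda>n. th (n + d) - th n) \<longlonglongrightarrow> 0" for d
  proof (induction d)
    case 0 then show ?case by simp
  next
    case (Suc d)
    have "(\<lambda>n. th (Suc (n + d)) - th (n + d)) \<longlonglongrightarrow> 0"
      using LIMSEQ_ignore_initial_segment[OF assms, of d] by simp
    from tendsto_add[OF this Suc.IH] show ?case by simp
  qed
  from tendsto_diff[OF d[of a] d[of b]] show ?thesis by simp
qed

lemma prod_close:
  fixes th :: "nat \<Rightarrow> real"
  assumes B: "Bseq th" and C: "(\<lambda>n. th (Suc n) - th n) \<longlonglongrightarrow> 0" and fin: "finite I"
  shows "(\<lambda>n. (\<Prod>i\<in>I. th (n + f i)) - th (n + b) ^ card I) \<longlonglongrightarrow> 0"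
  using fin
proof (induction I rule: finite_induct)
  case empty then show ?case by simp
next
  case (insert i I)
  have Bb: "Bseq (\<lambda>n. th (n + b))" using Bseq_subseq[OF B] .
  have Bp: "Bseq (\<lambda>n. th (n + b) ^ card I)"
    by (rule Bseq_cont[OF Bb]) (intro continuous_intros)
  have "(\<lambda>n. th (n + f i) * (\<Prod>i\<in>I. th (n + f i)) - th (n + b) * th (n + b) ^ card I) \<longlonglongrightarrow> 0"
    by (rule diff_mult_close[OF close_shift[OF C] insert.IH Bb Bp])
  then show ?case using insert.hyps by simp
qed

definition KX :: "(nat \<Rightarrow> real) \<Rightarrow> real \<Rightarrow> nat \<Rightarrow> real \<Rightarrow> real" where
  "KX kappa beta m c = (\<Sum>p = 0..m. (- beta * c) ^ p * kappa (m - p))"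

definition TT :: "(nat \<Rightarrow> real) \<Rightarrow> real \<Rightarrow> nat \<Rightarrow> real \<Rightarrow> real" where
  "TT kappa beta j c = (\<Sum>l = 0..j. (- c) ^ l * KX kappa beta (j - l) c)"

lemma TT_Suc: "TT kappa beta (Suc j) c = KX kappa beta (Suc j) c - c * TT kappa beta j c"
proof -
  have "TT kappa beta (Suc j) c = KX kappa beta (Suc j) c + (\<Sum>l=0..j. (- c) ^ Suc l * KX kappa beta (Suc j - Suc l) c)"
    unfolding TT_def by (simp only: sum.atLeast0_atMost_Suc_shift) simp
  also have "\<dots> = KX kappa beta (Suc j) c - c * TT kappa beta j c"
    unfolding TT_def by (simp add: sum_distrib_left sum_negf[symmetric] mult.assoc)
  finally show ?thesis .
qed

lemma TT_cont: "continuous_on UNIV (TT kappa beta j)"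
  unfolding TT_def KX_def by (intro continuous_intros)

lemma kphi_0: "kphi_aux kappa beta th n 0 = kappa 0"
  by (induction n) (auto simp: kappa_x_def)

lemma lemK:
  fixes th :: "nat \<Rightarrow> real"
  assumes B: "Bseq th" and C: "(\<lambda>n. th (Suc n) - th n) \<longlonglongrightarrow> 0"
  shows "(\<lambda>n. kphi_aux kappa beta th n j - TT kappa beta j (th (n + k))) \<longlonglongrightarrow> 0"
proof (induction j arbitrary: k)
  case 0
  then show ?case by (simp add: kphi_0 TT_def KX_def)
next
  case (Suc j)
  define c where "c = (\<lambda>m. th (m + (j + 2 + k)))"
  define P where "P = (\<lambda>m l. \<Prod>i = 1..l. th (m + (j + 3 - i)))"
  define A where "A = (\<lambda>m. \<Sum>l = 0..Suc j. (- beta) ^ l * kappa (Suc j - l) * (P m l - c m ^ l))"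
  define BB where "BB = (\<lambda>m. th (m + (j + 2)) * kphi_aux kappa beta th (m + Suc j) j - c m * TT kappa beta j (c m))"
  have kx: "kappa_x kappa beta th (m + Suc j + 2) (Suc j) = (\<Sum>l = 0..Suc j. (- beta) ^ l * kappa (Suc j - l) * P m l)" for m
    unfolding kappa_x_def P_def
  proof -
    have mn: "min (Suc j) (m + Suc j + 2 - 1) = Suc j" by simp
    show "(\<Sum>l = 0..min (Suc j) (m + Suc j + 2 - 1). (- beta) ^ l * kappa (Suc j - l) * (\<Prod>i = 1..l. th (m + Suc j + 2 - i))) =
      (\<Sum>l = 0..Suc j. (- beta) ^ l * kappa (Suc j - l) * (\<Prod>i = 1..l. th (m + (j + 3 - i))))"
      unfolding mn
      by (intro sum.cong refl arg_cong2[where f="(*)"] prod.cong) (auto intro!: arg_cong[where f=th])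
  qed
  have kxc: "KX kappa beta (Suc j) (c m) = (\<Sum>l = 0..Suc j. (- beta) ^ l * kappa (Suc j - l) * c m ^ l)" for m
    unfolding KX_def by (intro sum.cong refl) (simp add: power_mult_distrib[symmetric])
  have eq: "kphi_aux kappa beta th (m + Suc (Suc j)) (Suc j) - TT kappa beta (Suc j) (th (m + Suc (Suc j) + k))
      = A m - BB m" for m
  proof -
    have "m + Suc (Suc j) = Suc (m + Suc j)" by simp
    then have rec: "kphi_aux kappa beta th (m + Suc (Suc j)) (Suc j) =
       kappa_x kappa beta th (m + Suc j + 2) (Suc j) - th (m + (j + 2)) * kphi_aux kappa beta th (m + Suc j) j"
      by (simp add: add_ac)
    have cm: "th (m + Suc (Suc j) + k) = c m" unfolding c_def by (simp add: add_ac)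
    have Aeq: "A m = kappa_x kappa beta th (m + Suc j + 2) (Suc j) - KX kappa beta (Suc j) (c m)"
      unfolding A_def kx kxc by (simp only: right_diff_distrib sum_subtractf)
    have "kphi_aux kappa beta th (m + Suc (Suc j)) (Suc j) - TT kappa beta (Suc j) (th (m + Suc (Suc j) + k))
      = kappa_x kappa beta th (m + Suc j + 2) (Suc j) - th (m + (j + 2)) * kphi_aux kappa beta th (m + Suc j) j
        - (KX kappa beta (Suc j) (c m) - c m * TT kappa beta j (c m))"
      by (simp only: rec cm TT_Suc)
    then show ?thesis unfolding BB_def Aeq by linarith
  qed
  have Alim: "A \<longlonglongrightarrow> 0"
    unfolding A_def
  proof (intro tendsto_null_sum tendsto_mult_right_zero)
    fix l assume "l \<in> {0..Suc j}"
    have "(\<lambda>m. (\<Prod>i\<in>{1..l}. th (m + (j + 3 - i))) - th (m + (j + 2 + k)) ^ card {1..l}) \<longlonglongrightarrow> 0"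
      by (rule prod_close[OF B C]) simp
    then show "(\<lambda>m. P m l - c m ^ l) \<longlonglongrightarrow> 0" unfolding P_def c_def by simp
  qed
  have Bc: "Bseq c" unfolding c_def by (rule Bseq_subseq[OF B])
  have BT: "Bseq (\<lambda>m. TT kappa beta j (c m))" by (rule Bseq_cont[OF Bc TT_cont])
  have IH: "(\<lambda>m. kphi_aux kappa beta th (m + Suc j) j - TT kappa beta j (c m)) \<longlonglongrightarrow> 0"
    using LIMSEQ_ignore_initial_segment[OF Suc.IH[of "k + 1"], of "Suc j"]
    unfolding c_def by (simp add: add_ac)
  have BBlim: "BB \<longlonglongrightarrow> 0"
    unfolding BB_def
    by (rule diff_mult_close[OF _ IH Bc BT]) (unfold c_def, rule close_shift[OF C])
  have "(\<lambda>m. kphi_aux kappa beta th (m + Suc (Suc j)) (Suc j) - TT kappa beta (Suc j) (th (m + Suc (Suc j) + k))) \<longlonglongrightarrow> 0"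
    unfolding eq using tendsto_diff[OF Alim BBlim] by simp
  then show ?case by (rule LIMSEQ_offset)
qed


definition thA :: "real \<Rightarrow> (nat \<Rightarrow> real) \<Rightarrow> nat \<Rightarrow> real" where
  "thA b y n = fst (alg_state b y n)"
definition eA :: "real \<Rightarrow> (nat \<Rightarrow> real) \<Rightarrow> nat \<Rightarrow> real" where
  "eA b y n = fst (snd (snd (alg_state b y n)))"
definition pA :: "real \<Rightarrow> (nat \<Rightarrow> real) \<Rightarrow> nat \<Rightarrow> real" where
  "pA b y n = fst (snd (snd (snd (alg_state b y n))))"
definition sA :: "real \<Rightarrow> (nat \<Rightarrow> real) \<Rightarrow> nat \<Rightarrow> real" where
  "sA b y n = snd (snd (snd (snd (alg_state b y n))))"

lemma alg_Suc:
  "thA b y (Suc n) = thA b y n + inverse (sA b y n / real (n + 2)) * (1 / real (n + 2)) * pA b y n * eA b y (Suc n)"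
  "eA b y (Suc n) = y (n + 2) - thA b y n * eA b y n"
  "sA b y (Suc n) = sA b y n + (pA b y (Suc n))^2"
  by (simp_all add: thA_def eA_def pA_def sA_def Let_def split: prod.split)

lemma alg_0: "sA b y 0 = (y 1)^2" "pA b y 0 = y 1"
  by (simp_all add: pA_def sA_def)

lemma det:
  fixes yy :: "nat \<Rightarrow> real"
  assumes yb: "\<And>s. \<bar>yy s\<bar> \<le> B" and y1: "0 < (yy 1)^2" and c1: "c < 1"
    and thb: "\<forall>t\<ge>1. \<bar>theta beta yy (t + N)\<bar> \<le> c"
  shows "(\<lambda>t::nat. let th = theta beta yy in
        sigma2 / real t * (\<Sum>s = 1..t. \<Sum>j = 0..u. (kappa_phi kappa beta th s j)^2)
        - sigma2 / real t * (\<Sum>s = 1..t. \<Sum>j = 0..u.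
            (\<Sum>l = 0..j. (- th (s + kk)) ^ l *
               (\<Sum>p = 0..j - l. (- beta * th (s + kk)) ^ p * kappa (j - l - p)))^2))
      \<longlonglongrightarrow> 0"
proof -
  define th where "th = theta beta yy"
  have thA_b: "\<bar>thA beta yy n\<bar> \<le> c" if "n \<ge> N" for n
  proof -
    have "\<bar>theta beta yy (n + 1 - N + N)\<bar> \<le> c" using thb[rule_format, of "n + 1 - N"] that by simp
    moreover have "theta beta yy (n + 1 - N + N) = thA beta yy n"
      using that by (simp add: theta_def thA_def)
    ultimately show ?thesis by simp
  qed
  have c0: "0 \<le> c" using thA_b[of N] by simp
  have sA_pos: "0 < sA beta yy n" for n
  proof (induction n)
    case 0 show ?case unfolding alg_0 by (rule y1)
  next
    case (Suc n) then show ?case by (simp add: alg_Suc add_pos_nonneg)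
  qed
  have sA_mono: "sA beta yy n \<le> sA beta yy (Suc n)" for n by (simp add: alg_Suc)
  define M where "M = max \<bar>eA beta yy N\<bar> (B / (1 - c))"
  have BM: "B \<le> M * (1 - c)"
  proof -
    have "B / (1 - c) \<le> M" unfolding M_def by simp
    then show ?thesis using c1 by (simp add: pos_divide_le_eq)
  qed
  have eA_b: "\<bar>eA beta yy n\<bar> \<le> M" if "n \<ge> N" for n
    using that
  proof (induction n rule: dec_induct)
    case base then show ?case unfolding M_def by simp
  next
    case (step n)
    have "\<bar>thA beta yy n * eA beta yy n\<bar> \<le> c * M"
      unfolding abs_mult using thA_b[OF step(1)] step(3) c0 by (intro mult_mono) auto
    moreover have "\<bar>eA beta yy (Suc n)\<bar> \<le> \<bar>yy (n+2)\<bar> + \<bar>thA beta yy n * eA beta yy n\<bar>"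
      unfolding alg_Suc by (rule abs_triangle_ineq4)
    ultimately show ?case using yb[of "n+2"] BM by (simp add: algebra_simps)
  qed
  have BE: "Bseq (\<lambda>n. eA beta yy (Suc n))"
    unfolding Bfun_def
  proof (intro exI[of _ "max M 1"] conjI)
    show "eventually (\<lambda>n. norm (eA beta yy (Suc n)) \<le> max M 1) sequentially"
      unfolding eventually_sequentially
    proof (intro exI[of _ N] allI impI)
      fix n assume "N \<le> n"
      then have "\<bar>eA beta yy (Suc n)\<bar> \<le> M" using eA_b by simp
      then show "norm (eA beta yy (Suc n)) \<le> max M 1" by simp
    qed
  qed simp
  define r where "r = (\<lambda>n. 1 / sA beta yy n)"
  have "decseq r" unfolding r_def
    by (rule decseq_SucI) (use sA_pos sA_mono in \<open>simp add: frac_le\<close>)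
  then obtain L where "r \<longlonglongrightarrow> L" using decseq_convergent[of r 0] sA_pos
    unfolding r_def by (metis less_eq_real_def zero_less_divide_1_iff)
  then have rd: "(\<lambda>n. sqrt (r n - r (Suc n))) \<longlonglongrightarrow> 0"
    using tendsto_real_sqrt[OF tendsto_diff[OF \<open>r \<longlonglongrightarrow> L\<close> LIMSEQ_Suc[OF \<open>r \<longlonglongrightarrow> L\<close>]]] by simp
  have key: "(pA beta yy (Suc m) / sA beta yy (Suc m))^2 \<le> r m - r (Suc m)" for m
  proof -
    define s0 where "s0 = sA beta yy m"
    define s1 where "s1 = sA beta yy (Suc m)"
    have p2: "(pA beta yy (Suc m))^2 = s1 - s0" unfolding s0_def s1_def alg_Suc by simp
    have pos: "0 < s0" "s0 \<le> s1" unfolding s0_def s1_def using sA_pos sA_mono by auto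
    have "(pA beta yy (Suc m) / s1)^2 = (s1 - s0) / (s1 * s1)"
      by (simp add: power_divide power2_eq_square p2[symmetric])
    also have "\<dots> \<le> (s1 - s0) / (s0 * s1)"
      using pos by (intro divide_left_mono mult_right_mono mult_pos_pos) auto
    also have "\<dots> = 1 / s0 - 1 / s1" using pos by (simp add: field_simps)
    finally show ?thesis unfolding r_def s0_def s1_def .
  qed
  have "(\<lambda>m. pA beta yy (Suc m) / sA beta yy (Suc m)) \<longlonglongrightarrow> 0"
  proof (rule Lim_null_comparison[OF _ rd])
    show "\<forall>\<^sub>F m in sequentially. norm (pA beta yy (Suc m) / sA beta yy (Suc m)) \<le> sqrt (r m - r (Suc m))"
    proof (intro always_eventually allI)
      fix m
      have "\<bar>pA beta yy (Suc m) / sA beta yy (Suc m)\<bar>^2 \<le> r m - r (Suc m)"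
        using key[of m] by (simp only: power2_abs)
      then show "norm (pA beta yy (Suc m) / sA beta yy (Suc m)) \<le> sqrt (r m - r (Suc m))"
        unfolding real_norm_def by (rule real_le_rsqrt)
    qed
  qed
  then have PS: "(\<lambda>n. pA beta yy n / sA beta yy n) \<longlonglongrightarrow> 0" by (rule LIMSEQ_imp_Suc)
  have inc: "(\<lambda>n. thA beta yy (Suc n) - thA beta yy n) = (\<lambda>n. (pA beta yy n / sA beta yy n) * eA beta yy (Suc n))"
  proof
    fix n
    have "sA beta yy n \<noteq> 0" using sA_pos[of n] by simp
    then show "thA beta yy (Suc n) - thA beta yy n = (pA beta yy n / sA beta yy n) * eA beta yy (Suc n)"
      unfolding alg_Suc(1) by (simp add: field_simps)
  qed
  have "(\<lambda>n. thA beta yy (Suc n) - thA beta yy n) \<longlonglongrightarrow> 0"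
    unfolding inc by (rule zero_Bseq_mult[OF PS BE])
  then have "(\<lambda>n. th (Suc (Suc n)) - th (Suc n)) \<longlonglongrightarrow> 0"
    by (simp add: th_def theta_def thA_def)
  then have C: "(\<lambda>n. th (Suc n) - th n) \<longlonglongrightarrow> 0" by (rule LIMSEQ_imp_Suc)
  have Bth: "Bseq th"
    unfolding Bfun_def
  proof (intro exI[of _ 1] conjI)
    show "eventually (\<lambda>n. norm (th n) \<le> 1) sequentially"
      unfolding eventually_sequentially
    proof (intro exI[of _ "Suc N"] allI impI)
      fix n assume "Suc N \<le> n"
      then have "\<bar>thA beta yy (n - 1)\<bar> \<le> c" by (intro thA_b) simp
      then show "norm (th n) \<le> 1" using c1 by (simp add: th_def theta_def thA_def)
    qed
  qed simp
  define d where "d = (\<lambda>s. (\<Sum>j = 0..u. (kappa_phi kappa beta th s j)^2) - (\<Sum>j = 0..u. (TT kappa beta j (th (s + kk)))^2))"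
  have "(\<lambda>n. d (Suc n)) \<longlonglongrightarrow> 0"
  proof -
    have "(\<lambda>n. \<Sum>j = 0..u. kphi_aux kappa beta th n j * kphi_aux kappa beta th n j
            - TT kappa beta j (th (n + (kk + 1))) * TT kappa beta j (th (n + (kk + 1)))) \<longlonglongrightarrow> 0"
    proof (intro tendsto_null_sum)
      fix j
      have l: "(\<lambda>n. kphi_aux kappa beta th n j - TT kappa beta j (th (n + (kk + 1)))) \<longlonglongrightarrow> 0"
        by (rule lemK[OF Bth C])
      have b: "Bseq (\<lambda>n. TT kappa beta j (th (n + (kk + 1))))"
        by (rule Bseq_cont[OF Bseq_subseq[OF Bth] TT_cont])
      show "(\<lambda>n. kphi_aux kappa beta th n j * kphi_aux kappa beta th n j
            - TT kappa beta j (th (n + (kk + 1))) * TT kappa beta j (th (n + (kk + 1)))) \<longlonglongrightarrow> 0"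
        by (rule diff_mult_close[OF l l b b])
    qed
    then show ?thesis
      unfolding d_def by (simp add: kappa_phi_def sum_subtractf power2_eq_square)
  qed
  then have dl: "d \<longlonglongrightarrow> 0" by (rule LIMSEQ_imp_Suc)
  have "(\<lambda>t. sigma2 * ((\<Sum>s=1..t. d s) / real t)) \<longlonglongrightarrow> sigma2 * 0"
    by (intro tendsto_mult tendsto_const cesaro dl)
  moreover have "(\<lambda>t::nat. let th = theta beta yy in
        sigma2 / real t * (\<Sum>s = 1..t. \<Sum>j = 0..u. (kappa_phi kappa beta th s j)^2)
        - sigma2 / real t * (\<Sum>s = 1..t. \<Sum>j = 0..u.
            (\<Sum>l = 0..j. (- th (s + kk)) ^ l *
               (\<Sum>p = 0..j - l. (- beta * th (s + kk)) ^ p * kappa (j - l - p)))^2))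
      = (\<lambda>t. sigma2 * ((\<Sum>s=1..t. d s) / real t))"
    unfolding d_def th_def[symmetric] Let_def TT_def KX_def
    by (simp add: sum_subtractf right_diff_distrib diff_divide_distrib)
  ultimately show ?thesis by simp
qed


theorem lemma4p4:
  fixes M :: "'a measure"
    and y eps :: "int \<Rightarrow> 'a \<Rightarrow> real"
    and kappa :: "nat \<Rightarrow> real"
    and sigma2 K beta :: real
    and kst :: "'a \<Rightarrow> nat" and Kst :: "'a \<Rightarrow> real"
  assumes "prob_space M"
    \<comment> \<open>real, mean-zero, covariance-stationary\<close>
    and y_meas: "\<And>t. y t \<in> borel_measurable M"
    and y_L2: "\<And>t. integrable M (\<lambda>\<omega>. (y t \<omega>)^2)"
    and y_mean: "\<And>t. (\<integral>\<omega>. y t \<omega> \<partial>M) = 0"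
    and y_cov: "\<And>t h. (\<integral>\<omega>. y (t + h) \<omega> * y t \<omega> \<partial>M) = (\<integral>\<omega>. y h \<omega> * y 0 \<omega> \<partial>M)"
    \<comment> \<open>(D1)\<close>
    and D1: "AE \<omega> in M. (y 1 \<omega>)^2 > 0"
    \<comment> \<open>(D2)\<close>
    and D2_rep: "\<And>t. AE \<omega> in M. (\<lambda>s. kappa s * eps (t - int s) \<omega>) sums y t \<omega>"
    and D2_k0: "kappa 0 = 1"
    and D2_abs: "summable (\<lambda>s. \<bar>kappa s\<bar>)"
    and D2_root: "\<And>z::complex. norm z \<le> 1 \<Longrightarrow> (\<Sum>s. complex_of_real (kappa s) * z ^ s) \<noteq> 0"
    and mds_adapted: "\<And>t. eps t \<in> borel_measurable (nat_filt M y t)"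
    and mds_int: "\<And>t. integrable M (eps t)"
    and mds: "\<And>t. AE \<omega> in M. real_cond_exp M (nat_filt M y (t - 1)) (eps t) \<omega> = 0"
    \<comment> \<open>(D3)\<close>
    and D3: "\<And>t. AE \<omega> in M.
               real_cond_exp M (nat_filt M y (t - 1)) (\<lambda>\<omega>. (eps t \<omega>)^2) \<omega> = sigma2"
    \<comment> \<open>(D4)\<close>
    and D4: "AE \<omega> in M. \<forall>t. \<bar>eps t \<omega>\<bar> \<le> K"
    and beta: "0 \<le> beta" "beta \<le> 1"
    \<comment> \<open>eventual bound on theta\<close>
    and kst_rv: "kst \<in> measurable M (count_space UNIV)"
    and Kst_rv: "Kst \<in> borel_measurable M"
    and theta_bd: "AE \<omega> in M. 0 < Kst \<omega> \<and> Kst \<omega> < 1 \<and>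
         (\<forall>t\<ge>1. \<bar>theta beta (\<lambda>s. y (int s) \<omega>) (t + kst \<omega>)\<bar> \<le> Kst \<omega>)"
  shows "\<forall>(u::nat) (k::'a \<Rightarrow> nat). k \<in> measurable M (count_space UNIV) \<longrightarrow>
    (AE \<omega> in M.
      (\<lambda>t::nat.
        let th = theta beta (\<lambda>s. y (int s) \<omega>) in
        sigma2 / real t * (\<Sum>s = 1..t. \<Sum>j = 0..u. (kappa_phi kappa beta th s j)^2)
        - sigma2 / real t * (\<Sum>s = 1..t. \<Sum>j = 0..u.
            (\<Sum>l = 0..j. (- th (s + k \<omega>)) ^ l *
               (\<Sum>p = 0..j - l. (- beta * th (s + k \<omega>)) ^ p * kappa (j - l - p)))^2))
      \<longlonglongrightarrow> 0)"
proof (intro allI impI)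
  fix u :: nat and k :: "'a \<Rightarrow> nat"
  have AEy: "AE \<omega> in M. \<forall>t. (\<lambda>s. kappa s * eps (t - int s) \<omega>) sums y t \<omega>"
    unfolding AE_all_countable using D2_rep by blast
  show "AE \<omega> in M.
      (\<lambda>t::nat.
        let th = theta beta (\<lambda>s. y (int s) \<omega>) in
        sigma2 / real t * (\<Sum>s = 1..t. \<Sum>j = 0..u. (kappa_phi kappa beta th s j)^2)
        - sigma2 / real t * (\<Sum>s = 1..t. \<Sum>j = 0..u.
            (\<Sum>l = 0..j. (- th (s + k \<omega>)) ^ l *
               (\<Sum>p = 0..j - l. (- beta * th (s + k \<omega>)) ^ p * kappa (j - l - p)))^2))
      \<longlonglongrightarrow> 0"
    using AEy D4 D1 theta_bd
  proof eventually_elim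
    case (elim \<omega>)
    define B where "B = suminf (\<lambda>s. \<bar>kappa s\<bar>) * K"
    have sK: "(\<lambda>s. \<bar>kappa s\<bar> * K) sums B"
      unfolding B_def by (rule sums_mult2[OF summable_sums[OF D2_abs]])
    have yb: "\<bar>y t \<omega>\<bar> \<le> B" for t
    proof -
      have s: "(\<lambda>s. kappa s * eps (t - int s) \<omega>) sums y t \<omega>" using elim(1) by blast
      have le: "\<bar>kappa s * eps (t - int s) \<omega>\<bar> \<le> \<bar>kappa s\<bar> * K" for s
        unfolding abs_mult using elim(2) by (intro mult_left_mono) auto
      have "y t \<omega> \<le> B"
        by (rule sums_le[OF _ s sK]) (use le in \<open>simp add: abs_le_iff\<close>)
      moreover have "- y t \<omega> \<le> B"
        by (rule sums_le[OF _ sums_minus[OF s] sK]) (use le in \<open>simp add: abs_le_iff\<close>)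
      ultimately show ?thesis by linarith
    qed
    have y1: "0 < ((\<lambda>s. y (int s) \<omega>) 1)^2" using elim(3) by simp
    show ?case
      by (rule det[where yy="\<lambda>s. y (int s) \<omega>" and B=B and c="Kst \<omega>" and N="kst \<omega>"])
        (use yb y1 elim(4) in auto)
  qed
qed

end
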